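(* Let $p$ be an odd prime, $q=p^m$, and let $D$ be the set of all nonzero squares in $\mathrm{GF}(q)$. If $m$ is odd, then $\mathcal{C}_D$ is a one-weight code over $\mathrm{GF}(p)$ with parameters $[(q-1)/2,\ m,\ (p-1)q/(2p)]$. If $m$ is even, then $\mathcal{C}_D$ is a two-weight code over $\mathrm{GF}(p)$ with parameters $[(q-1)/2,\ m,\ (p-1)(q-\sqrt q)/(2p)]$ and weight enumerator $1+\frac{q-1}{2}z^{(p-1)(q-\sqrt q)/(2p)}+\frac{q-1}{2}z^{(p-1)(q+\sqrt q)/(2p)}$.
   Context: $\mathrm{Tr}$ denotes the absolute trace from $\mathrm{GF}(q)$ onto $\mathrm{GF}(p)$. For a subset $D=\{d_1,\dots,d_n\}\subseteq\mathrm{GF}(q)$ (listed in a fixed order), $\mathcal{C}_D=\{(\mathrm{Tr}(xd_1),\dots,\mathrm{Tr}(xd_n)) : x\in\mathrm{GF}(q)\}$, a linear code of length $n$ over $\mathrm{GF}(p)$. The weight enumerator of a code of length $n$ is $\sum_{i=0}^n A_iz^i$ where $A_i$ is the number of codewords of Hamming weight $i$; a $t$-weight code is one with exactly $t$ distinct nonzero weights. *)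

theory Defs
  imports "HOL-Computational_Algebra.Polynomial"
begin

definition tr :: "nat \<Rightarrow> nat \<Rightarrow> 'a::field \<Rightarrow> 'a" where
  "tr p m x = (\<Sum>i<m. x ^ (p ^ i))"

text \<open>The codeword indexed by x: the vector (Tr(x d))_{d in D}, represented as a function
  on D (value 0 outside D).\<close>
definition codeword :: "nat \<Rightarrow> nat \<Rightarrow> 'a::field set \<Rightarrow> 'a \<Rightarrow> ('a \<Rightarrow> 'a)" where
  "codeword p m D x = (\<lambda>d. if d \<in> D then tr p m (x * d) else 0)"

definition code :: "nat \<Rightarrow> nat \<Rightarrow> 'a::field set \<Rightarrow> ('a \<Rightarrow> 'a) set" where
  "code p m D = range (codeword p m D)"

definition code_length :: "'a set \<Rightarrow> nat" where
  "code_length D = card D"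

definition hamming_wt :: "'a set \<Rightarrow> ('a \<Rightarrow> 'b::zero) \<Rightarrow> nat" where
  "hamming_wt D c = card {d \<in> D. c d \<noteq> 0}"

definition wt_distr :: "nat \<Rightarrow> nat \<Rightarrow> 'a::field set \<Rightarrow> nat \<Rightarrow> nat" where
  "wt_distr p m D i = card {c \<in> code p m D. hamming_wt D c = i}"

definition weight_enumerator :: "nat \<Rightarrow> nat \<Rightarrow> 'a::field set \<Rightarrow> nat poly" where
  "weight_enumerator p m D = (\<Sum>i\<le>code_length D. monom (wt_distr p m D i) i)"

definition nonzero_weights :: "nat \<Rightarrow> nat \<Rightarrow> 'a::field set \<Rightarrow> nat set" where
  "nonzero_weights p m D = {hamming_wt D c | c. c \<in> code p m D \<and> c \<noteq> (\<lambda>_. 0)}"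

definition is_t_weight :: "nat \<Rightarrow> nat \<Rightarrow> nat \<Rightarrow> 'a::field set \<Rightarrow> bool" where
  "is_t_weight t p m D \<longleftrightarrow> card (nonzero_weights p m D) = t"

definition min_distance :: "nat \<Rightarrow> nat \<Rightarrow> 'a::field set \<Rightarrow> nat" where
  "min_distance p m D = Min (nonzero_weights p m D)"

text \<open>Dimension over GF(p): the code is a GF(p)-subspace, so dimension k means p^k codewords.\<close>
definition has_dim :: "nat \<Rightarrow> nat \<Rightarrow> 'a::field set \<Rightarrow> nat \<Rightarrow> bool" where
  "has_dim p m D k \<longleftrightarrow> card (code p m D) = p ^ k"

definition nonzero_squares :: "'a::field set" where
  "nonzero_squares = {y. y \<noteq> 0 \<and> (\<exists>x. y = x ^ 2)}"

end

theory Submission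
  imports Defs "HOL-Computational_Algebra.Primes"
begin

locale gfq =
  fixes p m :: nat and F :: "'a::{field,finite} set"
  assumes F: "F = UNIV" and pp: "prime p" and po: "odd p" and cardF: "card F = p ^ m"
begin

lemma cardU: "card (UNIV :: 'a set) = p ^ m" using F cardF by simp

lemma p_gt1: "p > 1" using pp prime_gt_1_nat by blast
lemma p_ge3: "p \<ge> 3" using p_gt1 po by presburger

lemma m_pos: "m > 0"
proof (rule ccontr)
  assume "\<not> m > 0"
  then have "card (UNIV :: 'a set) = 1" using cardU by simp
  then obtain z :: 'a where "UNIV = {z}" using card_1_singletonE by blast
  then have "(0::'a) = 1" by (metis UNIV_I singletonD)
  then show False by simp
qed

lemma CHAR_p: "CHAR('a) = p"
proof -
  have fin: "finite (UNIV :: 'a set)" by simp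
  have pos: "CHAR('a) > 0" using finite_imp_CHAR_pos[OF fin] .
  have pr: "prime CHAR('a)" using prime_CHAR_semidom[OF pos] .
  have "(\<Sum>y\<in>UNIV. y + (1::'a)) = (\<Sum>y\<in>UNIV. y)"
    by (rule sum.reindex_bij_witness[of _ "\<lambda>y. y - 1" "\<lambda>y. y + 1"]) auto
  then have "of_nat (card (UNIV :: 'a set)) = (0::'a)" by (simp add: sum.distrib)
  then have "CHAR('a) dvd p ^ m" using cardU of_nat_eq_0_iff_char_dvd by metis
  then have "CHAR('a) dvd p" using pr prime_dvd_power by blast
  then show ?thesis using pr pp primes_dvd_imp_eq by blast
qed

lemma frob_pow: "(x + y :: 'a) ^ (p ^ i) = x ^ (p ^ i) + y ^ (p ^ i)"
  by (rule freshmans_dream') (auto simp: CHAR_p pp)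

lemma frob_sum: "sum (f :: 'b \<Rightarrow> 'a) A ^ (p ^ i) = (\<Sum>j\<in>A. f j ^ (p ^ i))"
  by (rule freshmans_dream_sum') (auto simp: CHAR_p pp)

lemma pow_card: "(x :: 'a) ^ card (UNIV :: 'a set) = x"
proof (cases "x = 0")
  case False
  have "x * (\<Prod>y\<in>UNIV-{0}. x * y) = x * x ^ (card (UNIV :: 'a set) - 1) * \<Prod>(UNIV-{0})"
    by (simp add: prod.distrib mult_ac)
  also have "x * x ^ (card (UNIV :: 'a set) - 1) = x ^ Suc (card (UNIV :: 'a set) - 1)"
    by (subst power_Suc) auto
  also have "Suc (card (UNIV :: 'a set) - 1) = card (UNIV :: 'a set)"
    using finite_UNIV_card_ge_0[where ?'a = 'a] by simp
  also have "(\<Prod>y\<in>UNIV-{0}. x * y) = (\<Prod>y\<in>UNIV-{0}. y)"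
    by (rule prod.reindex_bij_witness[of _ "\<lambda>y. y / x" "\<lambda>y. x * y"]) (use False in auto)
  finally show ?thesis
    by simp
qed (use finite_UNIV_card_ge_0[where ?'a = 'a] in auto)

lemma pow_q: "(x :: 'a) ^ (p ^ m) = x" using pow_card cardU by simp

lemma of_nat_eq0: "(of_nat n :: 'a) = 0 \<longleftrightarrow> p dvd n"
  using of_nat_eq_0_iff_char_dvd[where 'a='a] CHAR_p by simp

lemma two_ne0: "(2::'a) \<noteq> 0"
proof
  assume "(2::'a) = 0"
  then have "(of_nat 2 :: 'a) = 0" by simp
  then have "p dvd 2" using of_nat_eq0 by blast
  then have "p \<le> 2" by (simp add: dvd_imp_le)
  then show False using p_ge3 by simp
qed

lemma neg_ne: "(x::'a) \<noteq> 0 \<Longrightarrow> -x \<noteq> x"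
proof
  assume "x \<noteq> 0" "-x = x"
  then have "2 * x = 0" by (simp add: algebra_simps mult_2)
  then show False using \<open>x\<noteq>0\<close> two_ne0 by simp
qed

abbreviation Tr :: "'a \<Rightarrow> 'a" where "Tr \<equiv> tr p m"

lemma tr_add: "Tr (x + y) = Tr x + Tr y"
  unfolding tr_def by (simp add: frob_pow sum.distrib)

lemma tr_0: "Tr 0 = 0"
  using p_gt1 by (simp add: tr_def power_0_left)

lemma tr_neg: "Tr (- x) = - Tr x"
  using tr_add[of x "-x"] tr_0 by (metis add.commute neg_eq_iff_add_eq_0)

lemma tr_diff: "Tr (x - y) = Tr x - Tr y"
  using tr_add[of x "-y"] tr_neg[of y] by simp

lemma P_pow: "(c::'a) ^ p = c \<Longrightarrow> c ^ (p ^ i) = c"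
proof (induction i)
  case (Suc i)
  then show ?case by (simp add: power_mult mult.commute[of p])
qed simp

lemma tr_scal: "(c::'a) ^ p = c \<Longrightarrow> Tr (c * x) = c * Tr x"
  unfolding tr_def by (simp add: power_mult_distrib P_pow sum_distrib_left)

lemma tr_pow: "Tr x ^ p = Tr x"
proof -
  define f where "f i = x ^ (p ^ i)" for i
  have "Tr x ^ p = (\<Sum>i<m. f i ^ p)"
    unfolding tr_def f_def using frob_sum[of "\<lambda>i. x ^ p ^ i" "{..<m}" 1] by simp
  also have "\<dots> = (\<Sum>i<m. f (Suc i))"
    by (simp add: f_def power_mult[symmetric] mult.commute[of p])
  also have "\<dots> = (\<Sum>i<Suc m. f i) - f 0"
    by (subst sum.lessThan_Suc_shift) simp
  also have "\<dots> = (\<Sum>i<m. f i)"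
    by (simp add: f_def pow_q)
  finally show ?thesis by (simp add: tr_def f_def)
qed

lemma tr_nonzero: "\<exists>x. Tr x \<noteq> 0"
proof (rule ccontr)
  assume "\<not> (\<exists>x. Tr x \<noteq> 0)"
  then have all0: "\<And>x. Tr x = 0" by blast
  define T :: "'a poly" where "T = (\<Sum>i<m. Polynomial.monom 1 (p ^ i))"
  have polyT: "poly T x = Tr x" for x
    by (simp add: T_def poly_sum poly_monom tr_def)
  have inj: "p ^ i = p ^ j \<longleftrightarrow> i = j" for i j
    using p_gt1 by (simp add: power_inject_exp)
  have "coeff T (p ^ (m - 1)) = (\<Sum>i<m. if p ^ i = p ^ (m-1) then 1 else 0)"
    by (simp add: T_def coeff_sum coeff_monom)
  also have "\<dots> = (\<Sum>i\<in>{m-1}. 1)"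
    by (rule sum.mono_neutral_cong_right) (use m_pos inj in auto)
  finally have "coeff T (p ^ (m - 1)) = 1" by simp
  then have T0: "T \<noteq> 0" by auto
  have degT: "degree T \<le> p ^ (m - 1)"
    unfolding T_def
    by (rule degree_sum_le) (use p_gt1 in \<open>auto intro!: order.trans[OF degree_monom_le]\<close>)
  have "{x. poly T x = 0} = UNIV" using polyT all0 by auto
  then have "p ^ m \<le> degree T" using card_poly_roots_bound[OF T0] cardU by simp
  with degT have "p ^ m \<le> p ^ (m - 1)" by simp
  then have "m \<le> m - 1" using p_gt1 by simp
  then show False using m_pos by simp
qed

definition P :: "'a set" where "P = {c. c ^ p = c}"

lemma tr_in_P: "Tr x \<in> P" using tr_pow by (simp add: P_def)

lemma card_P_le: "card P \<le> p"
proof -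
  define Q :: "'a poly" where "Q = monom 1 p - monom 1 1"
  have "coeff Q p = 1" using p_gt1 by (simp add: Q_def coeff_monom)
  then have Q0: "Q \<noteq> 0" by auto
  have "degree Q \<le> p" unfolding Q_def
    by (rule degree_diff_le) (use p_gt1 in \<open>auto simp: degree_monom_eq\<close>)
  moreover have "{x. poly Q x = 0} = P" by (auto simp: Q_def P_def poly_monom)
  ultimately show ?thesis using card_poly_roots_bound[OF Q0] by simp
qed

definition T0 :: "'a set" where "T0 = {x. Tr x = 0}"

lemma fiber_card:
  assumes "c \<in> P" shows "card {x. Tr x = c} = card T0"
proof -
  obtain a where a: "Tr a \<noteq> 0" using tr_nonzero by blast
  let ?t = "Tr a"
  have tP: "?t ^ p = ?t" using tr_pow .
  have cP: "c ^ p = c" using assms by (simp add: P_def)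
  have "(c / ?t) ^ p = c / ?t" by (simp add: power_divide tP cP)
  then have e: "Tr ((c / ?t) * a) = c" using tr_scal[of "c / ?t" a] a by simp
  let ?b = "(c / ?t) * a"
  have "{x. Tr x = c} = (\<lambda>x. ?b + x) ` T0"
  proof (intro set_eqI iffI)
    fix x assume "x \<in> {x. Tr x = c}"
    then have "x - ?b \<in> T0" using e by (simp add: T0_def tr_diff)
    then show "x \<in> (\<lambda>x. ?b + x) ` T0" by (intro image_eqI[of _ _ "x - ?b"]) simp_all
  next
    fix x assume "x \<in> (\<lambda>x. ?b + x) ` T0" then show "x \<in> {x. Tr x = c}" using e by (auto simp: T0_def tr_add)
  qed
  moreover have "inj ((+) ?b)" by (simp add: inj_def)
  ultimately show ?thesis by (simp add: card_image inj_on_def)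
qed

lemma card_P_T0: "card P * card T0 = p ^ m"
proof -
  have "UNIV = (\<Union>c\<in>P. {x. Tr x = c})" using tr_in_P by auto
  then have "p ^ m = card (\<Union>c\<in>P. {x. Tr x = c})" using cardU by simp
  also have "\<dots> = (\<Sum>c\<in>P. card {x. Tr x = c})"
    by (rule card_UN_disjoint) auto
  also have "\<dots> = (\<Sum>c\<in>P. card T0)" using fiber_card by simp
  finally show ?thesis by simp
qed

lemma card_P: "card P = p"
proof -
  have "card P dvd p ^ m" using card_P_T0 by (metis dvd_triv_left)
  then obtain i where i: "i \<le> m" "card P = p ^ i" using divides_primepow_nat[OF pp] by blast
  have "{0, 1} \<subseteq> P" using p_gt1 by (auto simp: P_def)
  moreover have "card {0, 1::'a} = 2" by simp
  ultimately have "2 \<le> card P" by (metis card_mono finite)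
  then have "i \<noteq> 0" using i by (cases i) auto
  moreover have "p ^ i \<le> p ^ 1" using card_P_le i by simp
  then have "i \<le> 1" using p_gt1 power_le_imp_le_exp by blast
  ultimately have "i = 1" by simp
  then show ?thesis using i by simp
qed

lemma p_T0: "p * card T0 = p ^ m" using card_P_T0 card_P by simp


definition hh :: nat where "hh = (p ^ m - 1) div 2"

lemma q_odd: "odd (p ^ m)" using po by simp
lemma q_ge3: "p ^ m \<ge> 3"
proof -
  have "p ^ 1 \<le> p ^ m" using m_pos p_gt1 by (intro power_increasing) auto
  then show ?thesis using p_ge3 by simp
qed
lemma two_hh: "2 * hh = p ^ m - 1" using q_odd unfolding hh_def by presburger
lemma hh_pos: "hh > 0" using two_hh q_ge3 by simp

lemma pow_q1: "(x::'a) \<noteq> 0 \<Longrightarrow> x ^ (p ^ m - 1) = 1"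
proof -
  assume x: "x \<noteq> 0"
  have "x * x ^ (p ^ m - 1) = x ^ Suc (p ^ m - 1)" by simp
  also have "Suc (p ^ m - 1) = p ^ m" using q_ge3 by simp
  finally have "x * x ^ (p ^ m - 1) = x * 1" using pow_q by simp
  then show ?thesis using x by simp
qed

lemma sq_fiber: "t \<noteq> (0::'a) \<Longrightarrow> card {y. y ^ 2 = t ^ 2} = 2"
proof -
  assume t: "t \<noteq> 0"
  have "{y. y ^ 2 = t ^ 2} = {t, -t}" by (auto simp: power2_eq_iff)
  moreover have "-t \<noteq> t" using neg_ne t .
  ultimately show ?thesis by simp
qed

abbreviation D :: "'a set" where "D \<equiv> nonzero_squares"

lemma two_to_one:
  assumes "A \<subseteq> D" shows "card {y. y \<noteq> 0 \<and> y ^ 2 \<in> A} = 2 * card A"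
proof -
  have "{y. y \<noteq> 0 \<and> y ^ 2 \<in> A} = (\<Union>a\<in>A. {y. y ^ 2 = a})"
    using assms by (auto simp: nonzero_squares_def)
  moreover have "card (\<Union>a\<in>A. {y. y ^ 2 = a}) = (\<Sum>a\<in>A. card {y. y ^ 2 = a})"
    by (rule card_UN_disjoint) auto
  moreover have "card {y. y ^ 2 = a} = 2" if aA: "a \<in> A" for a
  proof -
    obtain t where "a = t ^ 2" "a \<noteq> 0" using aA assms by (auto simp: nonzero_squares_def)
    then show ?thesis using sq_fiber[of t] by auto
  qed
  ultimately show ?thesis by simp
qed

lemma card_D: "card D = hh"
proof -
  have "{y::'a. y \<noteq> 0 \<and> y ^ 2 \<in> D} = UNIV - {0}" by (auto simp: nonzero_squares_def)
  then have "2 * card D = p ^ m - 1" using two_to_one[of D] cardU by (simp add: card_Diff_singleton)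
  then show ?thesis using two_hh by simp
qed

lemma euler:
  assumes "x \<noteq> 0" shows "x \<in> D \<longleftrightarrow> x ^ hh = 1"
proof -
  define R where "R = {x::'a. x ^ hh = 1}"
  have DR: "D \<subseteq> R"
  proof
    fix x assume "x \<in> D"
    then obtain t where t: "x = t ^ 2" "t \<noteq> 0" by (auto simp: nonzero_squares_def)
    have "x ^ hh = t ^ (2 * hh)" using t by (simp add: power_mult)
    then show "x \<in> R" using pow_q1[OF t(2)] two_hh by (simp add: R_def)
  qed
  define Q :: "'a poly" where "Q = monom 1 hh - 1"
  have "coeff Q hh = 1" using hh_pos by (simp add: Q_def coeff_monom)
  then have Q0: "Q \<noteq> 0" by auto
  have "degree Q \<le> hh" unfolding Q_def
    by (rule degree_diff_le) (auto simp: degree_monom_le)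
  moreover have "{x. poly Q x = 0} = R" by (auto simp: Q_def R_def poly_monom)
  ultimately have "card R \<le> hh" using card_poly_roots_bound[OF Q0] by simp
  moreover have "card D \<le> card R" using DR by (intro card_mono) auto
  ultimately have "D = R" using DR card_D by (intro card_subset_eq) auto
  then have "x \<in> D \<longleftrightarrow> x \<in> R" by simp
  then show ?thesis by (simp add: R_def)
qed

lemma pm1: "(x::'a) \<noteq> 0 \<Longrightarrow> x ^ hh = 1 \<or> x ^ hh = -1"
proof -
  assume x: "x \<noteq> 0"
  have "(x ^ hh) ^ 2 = 1" using pow_q1[OF x] two_hh by (simp add: power_mult[symmetric] mult.commute)
  then show ?thesis using power2_eq_1_iff by blast
qed

lemma one_ne_m1: "(1::'a) \<noteq> -1" using neg_ne[of 1] by auto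

lemma same_class:
  assumes "(a::'a) \<noteq> 0" "b \<noteq> 0" "a ^ hh = b ^ hh"
  shows "\<exists>t. t \<noteq> 0 \<and> b = a * t ^ 2"
proof -
  have "a ^ hh \<noteq> 0" using assms(1) by (metis power_not_zero)
  then have "(b / a) ^ hh = 1" using assms by (simp add: power_divide)
  moreover have "b / a \<noteq> 0" using assms by simp
  ultimately have "b / a \<in> D" using euler by blast
  then obtain t where t: "b / a = t ^ 2" by (auto simp: nonzero_squares_def)
  then have "t \<noteq> 0" using \<open>b / a \<noteq> 0\<close> by auto
  then show ?thesis using t using assms by (intro exI[of _ t]) (auto simp: field_simps)
qed

definition Z :: "'a \<Rightarrow> nat" where "Z a = card {y. Tr (a * y ^ 2) = 0}"

lemma Z_scale: assumes "t \<noteq> 0" shows "Z (a * t ^ 2) = Z a"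
proof -
  have "(\<lambda>y. t * y) ` {y. Tr (a * t ^ 2 * y ^ 2) = 0} = {y. Tr (a * y ^ 2) = 0}"
  proof (intro set_eqI iffI)
    fix x assume "x \<in> {y. Tr (a * y ^ 2) = 0}"
    then show "x \<in> (\<lambda>y. t * y) ` {y. Tr (a * t ^ 2 * y ^ 2) = 0}"
      using assms by (intro image_eqI[of _ _ "x / t"]) (auto simp: field_simps power2_eq_square)
  qed (auto simp: power_mult_distrib mult_ac)
  moreover have "inj (\<lambda>y. t * y)" using assms by (auto simp: inj_def)
  ultimately show ?thesis unfolding Z_def by (metis (no_types, lifting) card_image inj_on_subset subset_UNIV)
qed

lemma Z_class: "a \<noteq> 0 \<Longrightarrow> b \<noteq> 0 \<Longrightarrow> a ^ hh = b ^ hh \<Longrightarrow> Z b = Z a"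
  using same_class Z_scale by metis

lemma Z_0: "Z 0 = p ^ m" using tr_0 cardU by (simp add: Z_def)

lemma card_lin: assumes "b \<noteq> 0" shows "card {v. Tr (b * v) = 0} = card T0"
proof -
  have "(\<lambda>w. w / b) ` T0 = {v. Tr (b * v) = 0}"
  proof (intro set_eqI iffI)
    fix x assume "x \<in> {v. Tr (b * v) = 0}"
    then show "x \<in> (\<lambda>w. w / b) ` T0" using assms
      by (intro image_eqI[of _ _ "b * x"]) (auto simp: T0_def)
  qed (use assms in \<open>auto simp: T0_def\<close>)
  moreover have "inj (\<lambda>w. w / b)" using assms by (auto simp: inj_def)
  ultimately show ?thesis by (metis (no_types, lifting) card_image inj_on_subset subset_UNIV)
qed


definition wt :: "'a \<Rightarrow> nat" where "wt x = card {d \<in> D. Tr (x * d) \<noteq> 0}"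

lemma wt_Z: "2 * wt x + Z x = p ^ m"
proof -
  define A0 where "A0 = {d \<in> D. Tr (x * d) = 0}"
  have A0D: "A0 \<subseteq> D" by (auto simp: A0_def)
  have "{y. Tr (x * y ^ 2) = 0} = insert 0 {y. y \<noteq> 0 \<and> y ^ 2 \<in> A0}"
    using tr_0 by (auto simp: A0_def nonzero_squares_def)
  then have Zx: "Z x = 1 + 2 * card A0" using two_to_one[OF A0D] by (simp add: Z_def)
  have "D = A0 \<union> {d \<in> D. Tr (x * d) \<noteq> 0}" by (auto simp: A0_def)
  moreover have "A0 \<inter> {d \<in> D. Tr (x * d) \<noteq> 0} = {}" by (auto simp: A0_def)
  ultimately have "card D = card A0 + wt x" unfolding wt_def
    by (metis (no_types, lifting) card_Un_disjoint finite)
  then show ?thesis using card_D two_hh Zx q_ge3 by simp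
qed

definition Nn :: "'a set" where "Nn = {a. a \<noteq> 0 \<and> a ^ hh = -1}"

lemma D_alt: "D = {a. a \<noteq> 0 \<and> a ^ hh = 1}"
  using euler by (auto simp: nonzero_squares_def)

lemma split_nz: "UNIV - {0} = D \<union> Nn" "D \<inter> Nn = {}"
  using pm1 one_ne_m1 by (auto simp: D_alt Nn_def)

lemma card_Nn: "card Nn = hh"
proof -
  have "card (UNIV - {0::'a}) = p ^ m - 1" using cardU by (simp add: card_Diff_singleton)
  moreover have "card (D \<union> Nn) = card D + card Nn" using split_nz(2) by (simp add: card_Un_disjoint)
  ultimately show ?thesis using split_nz(1) card_D two_hh by simp
qed

lemma sum_split: "(\<Sum>a\<in>UNIV. f a) = f 0 + (\<Sum>a\<in>D. f a) + (\<Sum>a\<in>Nn. (f a :: nat))"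
proof -
  have "(\<Sum>a\<in>UNIV. f a) = f 0 + (\<Sum>a\<in>UNIV - {0}. f a)" by (simp add: sum.remove)
  also have "(\<Sum>a\<in>UNIV - {0}. f a) = (\<Sum>a\<in>D. f a) + (\<Sum>a\<in>Nn. f a)"
    unfolding split_nz(1) by (rule sum.union_disjoint) (use split_nz(2) in auto)
  finally show ?thesis by simp
qed

lemma first_moment: "(\<Sum>a\<in>UNIV. Z a) = p ^ m + (p ^ m - 1) * card T0"
proof -
  have "(\<Sum>a\<in>UNIV. Z a) = (\<Sum>a\<in>UNIV. \<Sum>y\<in>UNIV. of_bool (Tr (a * y ^ 2) = 0) :: nat)"
    by (simp add: Z_def)
  also have "\<dots> = (\<Sum>y\<in>UNIV. \<Sum>a\<in>UNIV. of_bool (Tr (a * y ^ 2) = 0) :: nat)"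
    by (rule sum.swap)
  also have "\<dots> = (\<Sum>y\<in>UNIV. card {a. Tr (y ^ 2 * a) = 0})"
    by (simp add: mult.commute)
  also have "\<dots> = card {a::'a. Tr (0 ^ 2 * a) = 0} + (\<Sum>y\<in>UNIV - {0}. card {a. Tr (y ^ 2 * a) = 0})"
    by (rule sum.remove) auto
  also have "(\<Sum>y\<in>UNIV - {0}. card {a. Tr (y ^ 2 * a) = 0}) = (\<Sum>y\<in>UNIV - {0::'a}. card T0)"
    by (rule sum.cong) (auto simp: card_lin)
  also have "card {a::'a. Tr (0 ^ 2 * a) = 0} = p ^ m" using tr_0 cardU by simp
  finally show ?thesis using cardU by (simp add: card_Diff_singleton)
qed

lemma Z_D: "a \<in> D \<Longrightarrow> Z a = Z 1"
  using Z_class[of 1 a] by (auto simp: D_alt)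

lemma Z_Nn: "a \<in> Nn \<Longrightarrow> c \<in> Nn \<Longrightarrow> Z a = Z c"
  using Z_class[of c a] by (auto simp: Nn_def)

lemma first_classes: assumes c: "c \<in> Nn" shows "Z 1 + Z c = 2 * card T0"
proof -
  have "(\<Sum>a\<in>UNIV. Z a) = p ^ m + hh * Z 1 + hh * Z c"
    using sum_split[of Z] Z_0 Z_D Z_Nn[OF _ c] card_D card_Nn by simp
  then have "hh * (Z 1 + Z c) = (p ^ m - 1) * card T0" using first_moment
    by (simp add: algebra_simps)
  also have "\<dots> = hh * (2 * card T0)" using two_hh by simp
  finally show ?thesis using hh_pos by simp
qed

lemma Nn_ne: "\<exists>c. c \<in> Nn"
  using card_Nn hh_pos by (metis card.empty ex_in_conv less_irrefl)

lemma geom: "(p - 1) * (\<Sum>i<n. p ^ i) + 1 = p ^ n"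
proof (induction n)
  case (Suc n)
  have "(p - 1) * (\<Sum>i<Suc n. p ^ i) + 1 = ((p - 1) * (\<Sum>i<n. p ^ i) + 1) + (p - 1) * p ^ n"
    by (simp add: algebra_simps)
  also have "\<dots> = p ^ n + (p - 1) * p ^ n" using Suc by simp
  also have "\<dots> = p ^ Suc n" using p_gt1 by (cases p) (auto simp: algebra_simps)
  finally show ?case .
qed simp

definition kk :: nat where "kk = (p - 1) div 2"
lemma two_kk: "2 * kk = p - 1" using po unfolding kk_def by presburger

lemma P_hh: assumes "c \<in> P" "c \<noteq> 0" shows "c ^ hh = c ^ (m * kk)"
proof -
  define s where "s = (\<Sum>i<m. p ^ i)"
  have e1: "p ^ m - 1 = (p - 1) * s" using geom[of m] unfolding s_def by linarith
  have "2 * hh = 2 * (kk * s)" using e1 two_hh two_kk by (metis mult.assoc)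
  then have hs: "hh = kk * s" by simp
  have cp: "c ^ p = c" using assms by (simp add: P_def)
  have "c ^ s = (\<Prod>i<m. c ^ (p ^ i))" by (simp add: s_def power_sum)
  also have "\<dots> = c ^ m" using P_pow[OF cp] by simp
  finally have "c ^ s = c ^ m" .
  then show ?thesis using hs by (simp add: power_mult mult.commute)
qed

lemma P_pm1: assumes "c \<in> P" "c \<noteq> 0" shows "c ^ (2 * kk) = 1"
proof -
  have cp: "c ^ p = c" using assms by (simp add: P_def)
  have "c * c ^ (2 * kk) = c ^ Suc (2 * kk)" by simp
  also have "Suc (2 * kk) = p" using two_kk p_gt1 by simp
  finally have "c * c ^ (2 * kk) = c * 1" using cp by simp
  then show ?thesis using assms by simp
qed

lemma P_even: assumes "even m" "c \<in> P" "c \<noteq> 0" shows "c \<in> D"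
proof -
  obtain j where "m = 2 * j" using assms by blast
  then have "c ^ hh = (c ^ (2 * kk)) ^ j" using P_hh[OF assms(2,3)] by (simp add: power_mult[symmetric] mult_ac)
  then have "c ^ hh = 1" using P_pm1[OF assms(2,3)] by simp
  then show ?thesis using assms(3) by (simp add: D_alt)
qed

lemma P_odd_exists: assumes "odd m" shows "\<exists>c. c \<in> P \<and> c \<in> Nn"
proof -
  define R where "R = {x::'a. x ^ kk = 1}"
  have kk_pos: "kk > 0" using two_kk p_ge3 by simp
  define Q :: "'a poly" where "Q = monom 1 kk - 1"
  have "coeff Q kk = 1" using kk_pos by (simp add: Q_def coeff_monom)
  then have Q0: "Q \<noteq> 0" by auto
  have "degree Q \<le> kk" unfolding Q_def
    by (rule degree_diff_le) (auto simp: degree_monom_le)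
  moreover have "{x. poly Q x = 0} = R" by (auto simp: Q_def R_def poly_monom)
  ultimately have cR: "card R \<le> kk" using card_poly_roots_bound[OF Q0] by simp
  have "card (P - {0}) = p - 1" using card_P p_gt1 by (simp add: card_Diff_singleton P_def)
  then have "card (P - {0}) > card R" using cR two_kk kk_pos by simp
  then have "\<not> (P - {0} \<subseteq> R)" by (metis card_mono finite leD)
  then obtain c where c: "c \<in> P" "c \<noteq> 0" "c ^ kk \<noteq> 1" by (auto simp: R_def)
  obtain j where j: "m = 2 * j + 1" using assms by (metis oddE)
  have "c ^ hh = c ^ kk * (c ^ (2 * kk)) ^ j" using P_hh[OF c(1,2)] j
    by (simp add: power_mult[symmetric] power_add[symmetric] algebra_simps)
  then have "c ^ hh = c ^ kk" using P_pm1[OF c(1,2)] by simp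
  then have "c ^ hh = -1" using pm1[OF c(2)] c(3) by auto
  then show ?thesis using c by (auto simp: Nn_def)
qed

lemma Z_odd: assumes "odd m" "a \<noteq> 0" shows "Z a = card T0"
proof -
  obtain c where c: "c \<in> P" "c \<in> Nn" using P_odd_exists[OF assms(1)] by blast
  have cp: "c ^ p = c" using c by (simp add: P_def)
  have c0: "c \<noteq> 0" using c by (simp add: Nn_def)
  have "{y. Tr (c * y ^ 2) = 0} = {y. Tr (1 * y ^ 2) = 0}"
    using tr_scal[OF cp] c0 by auto
  then have "Z c = Z 1" by (simp add: Z_def)
  then have Z1: "Z 1 = card T0" using first_classes[OF c(2)] by simp
  have "a \<in> D \<or> a \<in> Nn" using split_nz(1) assms(2) by blast
  then show ?thesis using Z_D Z_Nn[OF _ c(2)] Z1 \<open>Z c = Z 1\<close> by auto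
qed


definition Na :: "'a \<Rightarrow> 'a \<Rightarrow> nat" where "Na a c = card {y. Tr (a * y ^ 2) = c}"

lemma Na_sum: "(\<Sum>c\<in>P. Na a c) = p ^ m"
proof -
  have "UNIV = (\<Union>c\<in>P. {y. Tr (a * y ^ 2) = c})" using tr_in_P by auto
  then have "p ^ m = card (\<Union>c\<in>P. {y. Tr (a * y ^ 2) = c})" using cardU by simp
  also have "\<dots> = (\<Sum>c\<in>P. card {y. Tr (a * y ^ 2) = c})"
    by (rule card_UN_disjoint) auto
  finally show ?thesis by (simp add: Na_def)
qed

lemma Na_const: assumes "even m" "c \<in> P" "c \<noteq> 0" shows "Na a c = Na a 1"
proof -
  obtain mu where mu: "c = mu ^ 2" using P_even[OF assms] by (auto simp: nonzero_squares_def)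
  have mu0: "mu \<noteq> 0" using mu assms(3) by auto
  have cp: "c ^ p = c" using assms by (simp add: P_def)
  have key: "Tr (a * (mu * y) ^ 2) = c * Tr (a * y ^ 2)" for y
    using tr_scal[OF cp, of "a * y ^ 2"] mu by (simp add: power_mult_distrib mult_ac)
  have "(\<lambda>y. mu * y) ` {y. Tr (a * y ^ 2) = 1} = {y. Tr (a * y ^ 2) = c}"
  proof (intro set_eqI iffI)
    fix x assume x: "x \<in> {y. Tr (a * y ^ 2) = c}"
    have "x = mu * (x / mu)" using mu0 by simp
    then have "Tr (a * x ^ 2) = c * Tr (a * (x / mu) ^ 2)" using key[of "x / mu"] by metis
    then have "Tr (a * (x / mu) ^ 2) = 1" using x assms(3) by (simp add: field_simps)
    then show "x \<in> (\<lambda>y. mu * y) ` {y. Tr (a * y ^ 2) = 1}"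
      using mu0 by (intro image_eqI[of _ _ "x / mu"]) auto
  next
    fix x assume "x \<in> (\<lambda>y. mu * y) ` {y. Tr (a * y ^ 2) = 1}"
    then show "x \<in> {y. Tr (a * y ^ 2) = c}" using key by auto
  qed
  moreover have "inj (\<lambda>y. mu * y)" using mu0 by (auto simp: inj_def)
  ultimately show ?thesis unfolding Na_def
    by (metis (no_types, lifting) card_image inj_on_subset subset_UNIV)
qed

lemma pairs_eq: "card {(y, z). Tr (a * y ^ 2) = Tr (a * z ^ 2)} = (\<Sum>c\<in>P. Na a c * Na a c)"
proof -
  have "{(y, z). Tr (a * y ^ 2) = Tr (a * z ^ 2)} =
        (\<Union>c\<in>P. {y. Tr (a * y ^ 2) = c} \<times> {z. Tr (a * z ^ 2) = c})"
    using tr_in_P by auto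
  moreover have "card (\<Union>c\<in>P. {y. Tr (a * y ^ 2) = c} \<times> {z. Tr (a * z ^ 2) = c})
      = (\<Sum>c\<in>P. card ({y. Tr (a * y ^ 2) = c} \<times> {z. Tr (a * z ^ 2) = c}))"
    by (rule card_UN_disjoint) auto
  ultimately show ?thesis by (simp add: card_cartesian_product Na_def)
qed

lemma pairs_uv: "card {(y, z). Tr (a * y ^ 2) = Tr (a * z ^ 2)} = card {(u, v). Tr (a * u * v) = 0}"
proof (rule bij_betw_same_card)
  let ?f = "\<lambda>(y::'a, z). (y - z, y + z)"
  let ?g = "\<lambda>(u::'a, v). ((u + v) / 2, (v - u) / 2)"
  have two: "(2::'a) \<noteq> 0" by (rule two_ne0)
  have "(4::'a) = 2 * 2" by simp
  then have four: "(4::'a) \<noteq> 0" using two by (metis mult_eq_0_iff)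
  have e1: "a * (y - z) * (y + z) = a * y ^ 2 - a * z ^ 2" for y z :: 'a
    by (simp add: algebra_simps power2_eq_square)
  have e2: "a * ((u + v) / 2) ^ 2 - a * ((v - u) / 2) ^ 2 = a * u * v" for u v :: 'a
  proof -
    have "((u + v) / 2) ^ 2 - ((v - u) / 2) ^ 2 = ((u + v) ^ 2 - (v - u) ^ 2) / 4"
      unfolding power_divide diff_divide_distrib[symmetric] by simp
    also have "(u + v) ^ 2 - (v - u) ^ 2 = 4 * (u * v)" by (simp add: power2_eq_square algebra_simps)
    also have "4 * (u * v) / 4 = u * v" using four by simp
    finally have "((u + v) / 2) ^ 2 - ((v - u) / 2) ^ 2 = u * v" .
    then have "a * (((u + v) / 2) ^ 2 - ((v - u) / 2) ^ 2) = a * (u * v)" by simp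
    then show ?thesis by (simp add: right_diff_distrib mult.assoc)
  qed
  show "bij_betw ?f {(y, z). Tr (a * y ^ 2) = Tr (a * z ^ 2)} {(u, v). Tr (a * u * v) = 0}"
  proof (rule bij_betw_byWitness[where f' = ?g])
    show "\<forall>x\<in>{(y, z). Tr (a * y ^ 2) = Tr (a * z ^ 2)}. ?g (?f x) = x"
      using two four by (auto simp: field_simps)
    show "\<forall>x\<in>{(u, v). Tr (a * u * v) = 0}. ?f (?g x) = x"
      using two four by (auto simp: field_simps)
    show "?f ` {(y, z). Tr (a * y ^ 2) = Tr (a * z ^ 2)} \<subseteq> {(u, v). Tr (a * u * v) = 0}"
      using e1 by (auto simp: tr_diff)
    show "?g ` {(u, v). Tr (a * u * v) = 0} \<subseteq> {(y, z). Tr (a * y ^ 2) = Tr (a * z ^ 2)}"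
    proof clarify
      fix u v :: 'a assume "Tr (a * u * v) = 0"
      then have "Tr (a * ((u + v) / 2) ^ 2 - a * ((v - u) / 2) ^ 2) = 0" using e2 by simp
      then show "Tr (a * ((u + v) / 2) ^ 2) = Tr (a * ((v - u) / 2) ^ 2)" by (simp add: tr_diff)
    qed
  qed
qed

lemma card_uv: assumes "a \<noteq> 0" shows "card {(u, v). Tr (a * u * v) = 0} = p ^ m + (p ^ m - 1) * card T0"
proof -
  have "{(u, v). Tr (a * u * v) = 0} = (SIGMA u:UNIV. {v. Tr ((a * u) * v) = 0})" by auto
  then have "card {(u, v). Tr (a * u * v) = 0} = (\<Sum>u\<in>UNIV. card {v. Tr ((a * u) * v) = 0})"
    by simp
  also have "\<dots> = card {v. Tr ((a * 0) * v) = 0} + (\<Sum>u\<in>UNIV - {0}. card {v. Tr ((a * u) * v) = 0})"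
    by (rule sum.remove) auto
  also have "(\<Sum>u\<in>UNIV - {0}. card {v. Tr ((a * u) * v) = 0}) = (\<Sum>u\<in>UNIV - {0::'a}. card T0)"
    by (rule sum.cong) (auto simp: card_lin assms)
  also have "card {v. Tr ((a * 0) * v) = 0} = p ^ m" using tr_0 cardU by simp
  finally show ?thesis using cardU by (simp add: card_Diff_singleton)
qed

lemma Z_even: assumes "even m" "a \<noteq> 0"
  shows "(int p * int (Z a) - int (p ^ m)) ^ 2 = ((int p - 1) * int (p ^ (m div 2))) ^ 2"
proof -
  define M where "M = Na a 1"
  have Z0: "Na a 0 = Z a" by (simp add: Na_def Z_def)
  have P0: "0 \<in> P" using p_gt1 by (simp add: P_def)
  have cP0: "card (P - {0}) = p - 1" using card_P P0 by (simp add: card_Diff_singleton)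
  have s1: "(\<Sum>c\<in>P. Na a c) = Z a + (p - 1) * M"
  proof -
    have "(\<Sum>c\<in>P. Na a c) = Na a 0 + (\<Sum>c\<in>P - {0}. Na a c)" using P0 by (simp add: sum.remove)
    also have "(\<Sum>c\<in>P - {0}. Na a c) = (\<Sum>c\<in>P - {0}. M)"
      by (rule sum.cong) (auto simp: M_def Na_const[OF assms(1)])
    finally show ?thesis using cP0 Z0 by simp
  qed
  have s2: "(\<Sum>c\<in>P. Na a c * Na a c) = Z a * Z a + (p - 1) * (M * M)"
  proof -
    have "(\<Sum>c\<in>P. Na a c * Na a c) = Na a 0 * Na a 0 + (\<Sum>c\<in>P - {0}. Na a c * Na a c)"
      using P0 by (simp add: sum.remove)
    also have "(\<Sum>c\<in>P - {0}. Na a c * Na a c) = (\<Sum>c\<in>P - {0}. M * M)"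
      by (rule sum.cong) (auto simp: M_def Na_const[OF assms(1)])
    finally show ?thesis using cP0 Z0 by simp
  qed
  have E1: "Z a + (p - 1) * M = p ^ m" using s1 Na_sum by simp
  have E2: "Z a * Z a + (p - 1) * (M * M) = p ^ m + (p ^ m - 1) * card T0"
    using s2 pairs_eq[of a] pairs_uv[of a] card_uv[OF assms(2)] by simp
  have E3: "p * card T0 = p ^ m" by (rule p_T0)
  obtain j where j: "m = 2 * j" using assms(1) by blast
  have qr: "p ^ m = p ^ (m div 2) * p ^ (m div 2)" using j by (simp add: power_add[symmetric] mult_2)
  define z where "z = int (Z a)"
  define mm where "mm = int M"
  define pi where "pi = int p"
  define qi where "qi = int (p ^ m)"
  define ti where "ti = int (card T0)"
  define ri where "ri = int (p ^ (m div 2))"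
  have p1: "int (p - 1) = pi - 1" using p_gt1 by (simp add: pi_def of_nat_diff)
  have q1: "int (p ^ m - 1) = qi - 1" using q_ge3 by (simp add: qi_def of_nat_diff)
  have I1: "z + (pi - 1) * mm = qi"
    using arg_cong[OF E1, of int] p1 by (simp add: z_def mm_def qi_def)
  have I2: "z * z + (pi - 1) * (mm * mm) = qi + (qi - 1) * ti"
    using arg_cong[OF E2, of int] p1 q1 by (simp add: z_def mm_def qi_def ti_def)
  have I3: "pi * ti = qi" using arg_cong[OF E3, of int] by (simp add: pi_def ti_def qi_def)
  have I4: "qi = ri * ri" using arg_cong[OF qr, of int] by (simp add: qi_def ri_def)
  have "(pi * z - qi) ^ 2 = (pi - 1) ^ 2 * qi"
  proof -
    have "(pi - 1) * mm = qi - z" using I1 by simp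
    have h: "pi * (pi - 1) * (z * z + (pi - 1) * (mm * mm)) = pi * (pi - 1) * (qi + (qi - 1) * ti)"
      using I2 by simp
    have "pi * (pi - 1) * (z * z + (pi - 1) * (mm * mm)) = pi * (pi - 1) * z * z + pi * ((pi - 1) * mm) * ((pi - 1) * mm)"
      by (simp add: algebra_simps)
    also have "\<dots> = pi * (pi - 1) * z * z + pi * (qi - z) * (qi - z)" using \<open>(pi - 1) * mm = qi - z\<close> by simp
    finally have A: "pi * (pi - 1) * z * z + pi * (qi - z) * (qi - z) = pi * (pi - 1) * qi + (pi - 1) * (qi - 1) * (pi * ti)"
      using h by (simp add: algebra_simps)
    then have "pi * (pi - 1) * z * z + pi * (qi - z) * (qi - z) = pi * (pi - 1) * qi + (pi - 1) * (qi - 1) * qi"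
      using I3 by simp
    then show ?thesis by algebra
  qed
  then show ?thesis using I4 by (simp add: z_def pi_def qi_def ri_def power_mult_distrib power2_eq_square)
qed


abbreviation rr :: nat where "rr \<equiv> p ^ (m div 2)"

lemma rr_facts: assumes "even m" shows "rr * rr = p ^ m" "rr \<ge> p" "rr \<le> p ^ m"
proof -
  obtain j where j: "m = 2 * j" using assms by blast
  show "rr * rr = p ^ m" using j by (simp add: power_add[symmetric] mult_2)
  have "j \<ge> 1" using j m_pos by simp
  then have "p ^ 1 \<le> p ^ j" using p_gt1 by (intro power_increasing) auto
  then show "rr \<ge> p" using j by simp
  show "rr \<le> p ^ m" using p_gt1 by (intro power_increasing) auto
qed

lemma p1_int: "int (p - 1) = int p - 1" using p_gt1 by (simp add: of_nat_diff)

lemma Z_even_nat: assumes "even m" "a \<noteq> 0"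
  shows "p * Z a = p ^ m + (p - 1) * rr \<or> p * Z a + (p - 1) * rr = p ^ m"
proof -
  have e: "(int p * int (Z a) - int (p ^ m)) ^ 2 = ((int p - 1) * int rr) ^ 2"
    using Z_even[OF assms] by simp
  from e have "int p * int (Z a) - int (p ^ m) = (int p - 1) * int rr \<or>
               int p * int (Z a) - int (p ^ m) = - ((int p - 1) * int rr)"
    using power2_eq_iff by blast
  then show ?thesis
  proof
    assume h: "int p * int (Z a) - int (p ^ m) = (int p - 1) * int rr"
    have "int (p * Z a) = int (p ^ m + (p - 1) * rr)"
      unfolding of_nat_mult of_nat_add p1_int using h by simp
    then have "p * Z a = p ^ m + (p - 1) * rr" by (simp only: of_nat_eq_iff)
    then show ?thesis by blast
  next
    assume h: "int p * int (Z a) - int (p ^ m) = - ((int p - 1) * int rr)"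
    have "int (p * Z a + (p - 1) * rr) = int (p ^ m)"
      unfolding of_nat_mult of_nat_add p1_int using h by simp
    then have "p * Z a + (p - 1) * rr = p ^ m" by (simp only: of_nat_eq_iff)
    then show ?thesis by blast
  qed
qed

lemma wt_lo: assumes "even m" "p * Z a = p ^ m + (p - 1) * rr"
  shows "2 * p * wt a = (p - 1) * (p ^ m - rr)"
proof -
  have w: "2 * wt a + Z a = p ^ m" by (rule wt_Z)
  have rq: "rr \<le> p ^ m" using rr_facts(3)[OF assms(1)] .
  have a2: "int p * int (Z a) = int (p ^ m) + (int p - 1) * int rr"
    using arg_cong[OF assms(2), of int] unfolding of_nat_mult of_nat_add p1_int .
  have w2: "2 * int (wt a) + int (Z a) = int (p ^ m)"
    using arg_cong[OF w, of int] by simp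
  have "int (2 * p * wt a) = int p * (2 * int (wt a))" by simp
  also have "2 * int (wt a) = int (p ^ m) - int (Z a)" using w2 by linarith
  also have "int p * (int (p ^ m) - int (Z a)) = int p * int (p ^ m) - int p * int (Z a)"
    by (simp add: right_diff_distrib)
  also have "\<dots> = (int p - 1) * (int (p ^ m) - int rr)" unfolding a2 by (simp add: algebra_simps)
  also have "\<dots> = int ((p - 1) * (p ^ m - rr))" using rq p_gt1 by (simp add: of_nat_diff)
  finally show ?thesis by (simp only: of_nat_eq_iff)
qed

lemma wt_hi: assumes "even m" "p * Z a + (p - 1) * rr = p ^ m"
  shows "2 * p * wt a = (p - 1) * (p ^ m + rr)"
proof -
  have w: "2 * wt a + Z a = p ^ m" by (rule wt_Z)
  have a2: "int p * int (Z a) + (int p - 1) * int rr = int (p ^ m)"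
    using arg_cong[OF assms(2), of int] unfolding of_nat_mult of_nat_add p1_int .
  have w2: "2 * int (wt a) + int (Z a) = int (p ^ m)"
    using arg_cong[OF w, of int] by simp
  have a3: "int p * int (Z a) = int (p ^ m) - (int p - 1) * int rr" using a2 by linarith
  have "int (2 * p * wt a) = int p * (2 * int (wt a))" by simp
  also have "2 * int (wt a) = int (p ^ m) - int (Z a)" using w2 by linarith
  also have "int p * (int (p ^ m) - int (Z a)) = int p * int (p ^ m) - int p * int (Z a)"
    by (simp add: right_diff_distrib)
  also have "\<dots> = (int p - 1) * (int (p ^ m) + int rr)" unfolding a3 by (simp add: algebra_simps)
  also have "\<dots> = int ((p - 1) * (p ^ m + rr))" using p_gt1 by (simp add: of_nat_diff)
  finally show ?thesis by (simp only: of_nat_eq_iff)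
qed

lemma div_eq: "2 * p * w = X \<Longrightarrow> X div (2 * p) = w"
  using p_gt1 by auto

lemma even_classes: assumes "even m"
  shows "\<exists>wA wB. (\<forall>x\<in>D. wt x = wA) \<and> (\<forall>x\<in>Nn. wt x = wB) \<and>
     ((2 * p * wA = (p - 1) * (p ^ m - rr) \<and> 2 * p * wB = (p - 1) * (p ^ m + rr)) \<or>
      (2 * p * wB = (p - 1) * (p ^ m - rr) \<and> 2 * p * wA = (p - 1) * (p ^ m + rr)))"
proof -
  obtain c where c: "c \<in> Nn" using Nn_ne by blast
  have c0: "c \<noteq> 0" using c by (simp add: Nn_def)
  have sum: "p * Z 1 + p * Z c = 2 * p ^ m" using first_classes[OF c] p_T0
    by (metis add_mult_distrib2 mult.left_commute)
  have rpos: "(p - 1) * rr > 0" using p_gt1 by simp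
  have allD: "\<forall>x\<in>D. wt x = wt 1"
  proof
    fix x assume "x \<in> D" then have "Z x = Z 1" by (rule Z_D)
    then show "wt x = wt 1" using wt_Z[of x] wt_Z[of 1] by simp
  qed
  have allN: "\<forall>x\<in>Nn. wt x = wt c"
  proof
    fix x assume "x \<in> Nn" then have "Z x = Z c" using Z_Nn c by blast
    then show "wt x = wt c" using wt_Z[of x] wt_Z[of c] by simp
  qed
  have d1: "p * Z 1 = p ^ m + (p - 1) * rr \<or> p * Z 1 + (p - 1) * rr = p ^ m"
    using Z_even_nat[OF assms, of 1] by simp
  have dc: "p * Z c = p ^ m + (p - 1) * rr \<or> p * Z c + (p - 1) * rr = p ^ m"
    using Z_even_nat[OF assms c0] .
  show ?thesis
  proof (rule exI[of _ "wt 1"], rule exI[of _ "wt c"], intro conjI allD allN)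
    show "(2 * p * wt 1 = (p - 1) * (p ^ m - rr) \<and> 2 * p * wt c = (p - 1) * (p ^ m + rr)) \<or>
      (2 * p * wt c = (p - 1) * (p ^ m - rr) \<and> 2 * p * wt 1 = (p - 1) * (p ^ m + rr))"
      using d1 dc sum rpos wt_lo[OF assms] wt_hi[OF assms] by auto
  qed
qed

definition cw :: "'a \<Rightarrow> ('a \<Rightarrow> 'a)" where "cw = codeword p m D"

lemma hw_cw: "hamming_wt D (cw x) = wt x"
  unfolding hamming_wt_def cw_def codeword_def wt_def by (rule arg_cong[where f = card]) auto

lemma cw_zero_iff: "cw x = (\<lambda>_. 0) \<longleftrightarrow> wt x = 0"
proof -
  have "cw x = (\<lambda>_. 0) \<longleftrightarrow> (\<forall>d\<in>D. Tr (x * d) = 0)"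
    unfolding cw_def codeword_def by (auto simp: fun_eq_iff)
  also have "\<dots> \<longleftrightarrow> {d \<in> D. Tr (x * d) \<noteq> 0} = {}" by auto
  also have "\<dots> \<longleftrightarrow> wt x = 0" unfolding wt_def by simp
  finally show ?thesis .
qed

lemma T0_pos: "card T0 > 0" using p_T0 p_gt1 by (cases "card T0") auto

lemma T0_lt: "card T0 < p ^ m"
proof -
  have "1 * card T0 < p * card T0" using T0_pos p_gt1 by (intro mult_strict_right_mono) auto
  then show ?thesis using p_T0 by simp
qed

lemma rr_lt: assumes "even m" shows "rr < p ^ m"
proof -
  have "rr * rr = p ^ m" "rr \<ge> p" using rr_facts[OF assms] by auto
  moreover have "1 * rr < rr * rr" using \<open>rr \<ge> p\<close> p_gt1 by (intro mult_strict_right_mono) auto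
  ultimately show ?thesis by simp
qed

lemma wt_pos: assumes "x \<noteq> 0" shows "wt x > 0"
proof (cases "even m")
  case True
  have xc: "x \<in> D \<or> x \<in> Nn" using split_nz(1) assms by blast
  obtain wA wB where w: "(\<forall>x\<in>D. wt x = wA)" "(\<forall>x\<in>Nn. wt x = wB)" and
     ww: "((2 * p * wA = (p - 1) * (p ^ m - rr) \<and> 2 * p * wB = (p - 1) * (p ^ m + rr)) \<or>
      (2 * p * wB = (p - 1) * (p ^ m - rr) \<and> 2 * p * wA = (p - 1) * (p ^ m + rr)))"
    using even_classes[OF True] by blast
  have pos: "(p - 1) * (p ^ m - rr) > 0" "(p - 1) * (p ^ m + rr) > 0"
    using rr_lt[OF True] p_gt1 by auto
  have A: "2 * p * wA = (p - 1) * (p ^ m - rr) \<or> 2 * p * wA = (p - 1) * (p ^ m + rr)" using ww by blast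
  have B: "2 * p * wB = (p - 1) * (p ^ m - rr) \<or> 2 * p * wB = (p - 1) * (p ^ m + rr)" using ww by blast
  have "2 * p * wA > 0" by (rule disjE[OF A]) (simp_all only: pos)
  moreover have "2 * p * wB > 0" by (rule disjE[OF B]) (simp_all only: pos)
  ultimately have "wA > 0" "wB > 0" by auto
  then show ?thesis using xc w by auto
next
  case False
  have "2 * wt x + card T0 = p ^ m" using wt_Z[of x] Z_odd[OF False assms] by simp
  then show ?thesis using T0_lt by simp
qed

lemma cw_diff: "cw (x - y) = (\<lambda>d. cw x d - cw y d)"
  unfolding cw_def codeword_def by (auto simp: fun_eq_iff algebra_simps tr_diff)

lemma cw_inj: "inj cw"
proof (rule injI)
  fix x y assume "cw x = cw y"
  then have "cw (x - y) = (\<lambda>_. 0)" using cw_diff by simp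
  then have "wt (x - y) = 0" using cw_zero_iff by blast
  then show "x = y" using wt_pos[of "x - y"] by (metis less_irrefl_nat right_minus_eq)
qed

lemma card_code: "card (code p m D) = p ^ m"
  unfolding code_def cw_def[symmetric] using cw_inj cardU by (simp add: card_image)

lemma wt_0: "wt 0 = 0" unfolding wt_def using tr_0 by simp

lemma nzw: "nonzero_weights p m D = wt ` (UNIV - {0})"
proof -
  have "nonzero_weights p m D = {hamming_wt D c | c. c \<in> range cw \<and> c \<noteq> (\<lambda>_. 0)}"
    unfolding nonzero_weights_def code_def cw_def by simp
  also have "\<dots> = wt ` (UNIV - {0})"
  proof (intro set_eqI iffI)
    fix w assume "w \<in> {hamming_wt D c | c. c \<in> range cw \<and> c \<noteq> (\<lambda>_. 0)}"
    then obtain x where x: "w = hamming_wt D (cw x)" "cw x \<noteq> (\<lambda>_. 0)" by blast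
    then have "x \<noteq> 0" using cw_zero_iff wt_0 by auto
    then show "w \<in> wt ` (UNIV - {0})" using x hw_cw by auto
  next
    fix w assume "w \<in> wt ` (UNIV - {0})"
    then obtain x where x: "w = wt x" "x \<noteq> 0" by blast
    then have "cw x \<noteq> (\<lambda>_. 0)" using cw_zero_iff wt_pos[of x] by simp
    then show "w \<in> {hamming_wt D c | c. c \<in> range cw \<and> c \<noteq> (\<lambda>_. 0)}" using x hw_cw[of x]
      by (intro CollectI exI[of _ "cw x"]) auto
  qed
  finally show ?thesis .
qed

lemma wtd: "wt_distr p m D i = card {x. wt x = i}"
proof -
  have "{c \<in> code p m D. hamming_wt D c = i} = cw ` {x. wt x = i}"
    unfolding code_def cw_def[symmetric] using hw_cw by auto
  moreover have "inj_on cw {x. wt x = i}" using cw_inj by (simp add: inj_on_def inj_def)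
  ultimately show ?thesis unfolding wt_distr_def by (simp add: card_image)
qed


lemma wt_le: "wt x \<le> hh"
proof -
  have "wt x \<le> card D" unfolding wt_def by (rule card_mono) auto
  then show ?thesis using card_D by simp
qed

lemma one_D: "(1::'a) \<in> D" unfolding nonzero_squares_def by (auto intro: exI[of _ 1])

lemma common: "code_length D = (p ^ m - 1) div 2 \<and> has_dim p m D m"
  using card_D card_code by (simp add: code_length_def has_dim_def hh_def)

lemma odd_main: assumes "odd m"
  shows "is_t_weight 1 p m D \<and> code_length D = (p ^ m - 1) div 2 \<and> has_dim p m D m
            \<and> min_distance p m D = (p - 1) * p ^ m div (2 * p)"
proof -
  define W where "W = (p - 1) * p ^ m div (2 * p)"
  have wx: "wt x = W" if "x \<noteq> 0" for x
  proof -
    have "2 * wt x + card T0 = p ^ m" using wt_Z[of x] Z_odd[OF assms that] by simp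
    then have "p * (2 * wt x) + p * card T0 = p * p ^ m" by (metis add_mult_distrib2)
    then have "2 * p * wt x + p ^ m = p * p ^ m" using p_T0 by (simp add: mult_ac)
    moreover have "(p - 1) * p ^ m = p * p ^ m - p ^ m" by (simp add: diff_mult_distrib)
    ultimately have "2 * p * wt x = (p - 1) * p ^ m" by linarith
    then show ?thesis unfolding W_def using div_eq by metis
  qed
  have "wt ` (UNIV - {0}) = {W}"
  proof
    show "wt ` (UNIV - {0}) \<subseteq> {W}" using wx by auto
    show "{W} \<subseteq> wt ` (UNIV - {0})" using wx[of 1] by (auto intro: image_eqI[of _ _ 1])
  qed
  then have nw: "nonzero_weights p m D = {W}" using nzw by simp
  show ?thesis using common nw unfolding is_t_weight_def min_distance_def W_def by simp
qed

lemma even_main: assumes "even m"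
  shows "is_t_weight 2 p m D \<and> code_length D = (p ^ m - 1) div 2 \<and> has_dim p m D m
            \<and> min_distance p m D = (p - 1) * (p ^ m - p ^ (m div 2)) div (2 * p)
            \<and> weight_enumerator p m D =
                1 + monom ((p ^ m - 1) div 2) ((p - 1) * (p ^ m - p ^ (m div 2)) div (2 * p))
                  + monom ((p ^ m - 1) div 2) ((p - 1) * (p ^ m + p ^ (m div 2)) div (2 * p))"
proof -
  define wlo where "wlo = (p - 1) * (p ^ m - rr) div (2 * p)"
  define whi where "whi = (p - 1) * (p ^ m + rr) div (2 * p)"
  obtain wA wB where w: "\<forall>x\<in>D. wt x = wA" "\<forall>x\<in>Nn. wt x = wB" and
     ww: "((2 * p * wA = (p - 1) * (p ^ m - rr) \<and> 2 * p * wB = (p - 1) * (p ^ m + rr)) \<or>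
      (2 * p * wB = (p - 1) * (p ^ m - rr) \<and> 2 * p * wA = (p - 1) * (p ^ m + rr)))"
    using even_classes[OF assms] by blast
  have AB: "(wA = wlo \<and> wB = whi) \<or> (wB = wlo \<and> wA = whi)"
  proof (rule disjE[OF ww])
    assume h: "2 * p * wA = (p - 1) * (p ^ m - rr) \<and> 2 * p * wB = (p - 1) * (p ^ m + rr)"
    show ?thesis using div_eq[OF conjunct1[OF h]] div_eq[OF conjunct2[OF h]] unfolding wlo_def whi_def by simp
  next
    assume h: "2 * p * wB = (p - 1) * (p ^ m - rr) \<and> 2 * p * wA = (p - 1) * (p ^ m + rr)"
    show ?thesis using div_eq[OF conjunct1[OF h]] div_eq[OF conjunct2[OF h]] unfolding wlo_def whi_def by simp
  qed
  have "(p - 1) * (p ^ m - rr) < (p - 1) * (p ^ m + rr)"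
  proof (intro mult_strict_left_mono)
    have "rr > 0" using p_gt1 by simp
    then show "p ^ m - rr < p ^ m + rr" using rr_lt[OF assms] by linarith
  qed (use p_gt1 in auto)
  moreover obtain w1 where w1: "2 * p * w1 = (p - 1) * (p ^ m - rr)" using ww by blast
  moreover obtain w2 where w2: "2 * p * w2 = (p - 1) * (p ^ m + rr)" using ww by blast
  moreover have "wlo = w1" unfolding wlo_def using div_eq[OF w1] .
  moreover have "whi = w2" unfolding whi_def using div_eq[OF w2] .
  ultimately have "2 * p * wlo < 2 * p * whi" by simp
  then have lohi: "wlo < whi" by simp
  obtain c where c: "c \<in> Nn" using Nn_ne by blast
  have wApos: "wA > 0" using wt_pos[of 1] w one_D by auto
  have wBpos: "wB > 0" using wt_pos[of c] w c by (auto simp: Nn_def)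
  have wAle: "wA \<le> hh" using wt_le[of 1] w one_D by auto
  have wBle: "wB \<le> hh" using wt_le[of c] w c by auto
  have D0: "0 \<notin> D" by (simp add: nonzero_squares_def)
  have img: "wt ` (UNIV - {0}) = {wA, wB}"
  proof
    show "wt ` (UNIV - {0}) \<subseteq> {wA, wB}" using split_nz(1) w by auto
    show "{wA, wB} \<subseteq> wt ` (UNIV - {0})"
      using w one_D c D0 split_nz(1) by (auto intro: image_eqI[of _ _ 1] image_eqI[of _ _ c])
  qed
  then have nw: "nonzero_weights p m D = {wlo, whi}" using nzw AB by auto
  have tw: "is_t_weight 2 p m D" using nw lohi by (simp add: is_t_weight_def)
  have md: "min_distance p m D = wlo" using nw lohi by (simp add: min_distance_def)
  have Ak: "card {x. wt x = k} = (if k = 0 then 1 else 0) + (if k = wlo then hh else 0) + (if k = whi then hh else 0)" for k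
  proof -
    have cls: "x = 0 \<or> x \<in> D \<or> x \<in> Nn" for x using split_nz(1) by blast
    have neq: "wA \<noteq> wB" using AB lohi by auto
    show ?thesis
    proof (cases "k = 0")
      case True
      have "{x. wt x = k} = {0}"
      proof (intro set_eqI iffI)
        fix x assume "x \<in> {x. wt x = k}"
        then have "wt x = 0" using True by simp
        then show "x \<in> {0}" using wt_pos[of x] by (cases "x = 0") auto
      qed (use True wt_0 in auto)
      then show ?thesis using True wApos wBpos AB by auto
    next
      case k0: False
      show ?thesis
      proof (cases "k = wA")
        case True
        have "{x. wt x = k} = D"
        proof (intro set_eqI iffI)
          fix x assume "x \<in> {x. wt x = k}"
          then have "wt x = k" by simp
          then show "x \<in> D" using cls[of x] True w neq wt_0 k0 by auto
        qed (use True w in auto)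
        then show ?thesis using True k0 AB lohi card_D by auto
      next
        case nA: False
        show ?thesis
        proof (cases "k = wB")
          case True
          have "{x. wt x = k} = Nn"
          proof (intro set_eqI iffI)
            fix x assume "x \<in> {x. wt x = k}"
            then have "wt x = k" by simp
            then show "x \<in> Nn" using cls[of x] True w neq wt_0 k0 by auto
          qed (use True w in auto)
          then show ?thesis using True k0 AB lohi card_Nn by auto
        next
          case False
          have "{x. wt x = k} = {}"
          proof (intro set_eqI iffI)
            fix x assume "x \<in> {x. wt x = k}"
            then have "wt x = k" by simp
            then show "x \<in> {}" using cls[of x] False nA w wt_0 k0 by auto
          qed simp
          then show ?thesis using False nA k0 AB by auto
        qed
      qed
    qed
  qed
  have cl: "code_length D = hh" using card_D by (simp add: code_length_def)
  have wlo_le: "wlo \<le> hh" "whi \<le> hh" using AB wAle wBle by auto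
  have we: "weight_enumerator p m D = 1 + monom hh wlo + monom hh whi"
  proof (rule poly_eqI)
    fix k
    have "coeff (weight_enumerator p m D) k = (\<Sum>i\<le>hh. if i = k then card {x. wt x = i} else 0)"
      unfolding weight_enumerator_def cl by (simp add: coeff_sum coeff_monom wtd)
    also have "\<dots> = (if k \<le> hh then card {x. wt x = k} else 0)" by simp
    also have "\<dots> = card {x. wt x = k}" using Ak[of k] wlo_le by auto
    also have "\<dots> = coeff (1 + monom hh wlo + monom hh whi) k"
      using Ak[of k] by (simp add: coeff_monom coeff_1)
    finally show "coeff (weight_enumerator p m D) k = coeff (1 + monom hh wlo + monom hh whi) k" .
  qed
  show ?thesis using common tw md we unfolding wlo_def whi_def hh_def by simp
qed

end

theorem mainTheorem3:
  fixes p m :: nat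
    and F :: "'a::{field,finite} set"
  assumes "F = UNIV" and "prime p" and "odd p" and "card F = p ^ m"
  defines "q \<equiv> p ^ m"
    and "D \<equiv> (nonzero_squares :: 'a set)"
  shows "(odd m \<longrightarrow>
            is_t_weight 1 p m D \<and> code_length D = (q - 1) div 2 \<and> has_dim p m D m
            \<and> min_distance p m D = (p - 1) * q div (2 * p))
       \<and> (even m \<longrightarrow>
            is_t_weight 2 p m D \<and> code_length D = (q - 1) div 2 \<and> has_dim p m D m
            \<and> min_distance p m D = (p - 1) * (q - p ^ (m div 2)) div (2 * p)
            \<and> weight_enumerator p m D =
                1 + monom ((q - 1) div 2) ((p - 1) * (q - p ^ (m div 2)) div (2 * p))
                  + monom ((q - 1) div 2) ((p - 1) * (q + p ^ (m div 2)) div (2 * p)))"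
proof -
  interpret G: gfq p m F using assms(1-4) by unfold_locales
  show ?thesis unfolding q_def D_def using G.odd_main G.even_main by blast
qed

end
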